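(* Let $M\ge2$ and let $L^{(1)},\dots,L^{(M)}$ be the $N^{(1)}\times N^{(1)}$ matrices of a hierarchical system as described in the context. Let $s_1,\dots,s_M$ be nonzero complex numbers and $L_s=\sum_{l=1}^M s_lL^{(l)}$. Then \[ \lambda(L_s)=\{0\}\cup\big(\lambda(s_1L^{(1)})\setminus\{0\}\big)\cup\cdots\cup\big(\lambda(s_ML^{(M)})\setminus\{0\}\big). \]
   Context: Hierarchical structure. Fix an integer $M\ge 2$ and positive integers $N^{(1)},\dots,N^{(M)}$; set $N^{(M+1)}:=1$. For each $l\in\{1,\dots,M\}$ the $N^{(l)}$ nodes of layer $l$ are partitioned into $N^{(l+1)}$ groups $G^{(l)}_1,\dots,G^{(l)}_{N^{(l+1)}}$ of sizes $k^{(l)}_p\ge1$ (so $\sum_pk^{(l)}_p=N^{(l)}$), numbered consecutively: group $G^{(l)}_p$ consists of nodes $\sum_{m<p}k^{(l)}_m+1,\dots,\sum_{m\le p}k^{(l)}_m$ of layer $l$. Each group $G^{(l)}_p$ carries a connected undirected graph with binary adjacency matrix; $L^{(l)}_p$ is its Laplacian (degree matrix minus adjacency matrix), and $L^{(l)}_D=\mathrm{diag}(L^{(l)}_1,\dots,L^{(l)}_{N^{(l+1)}})$ (block diagonal). Weights: positive constants $a_1,\dots,a_{N^{(1)}}$; $a^{(1)}_i=a_i$, $a^{(l+1)}_p=\sum_{i\in G^{(l)}_p}a^{(l)}_i$; $K^{(l)}=\mathrm{diag}(a^{(l)}_1,\dots,a^{(l)}_{N^{(l)}})^{-1}$. For $l=1,\dots,M-1$: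 $B^{(l)}=\mathrm{diag}(\mathbf{1}_{k^{(l)}_1},\dots,\mathbf{1}_{k^{(l)}_{N^{(l+1)}}})\in\mathbb{R}^{N^{(l)}\times N^{(l+1)}}$ ($\mathbf 1_k$ all-ones column vector), $C^{(l)}=\mathrm{diag}(C^{(l)}_1,\dots,C^{(l)}_{N^{(l+1)}})\in\mathbb{R}^{N^{(l+1)}\times N^{(l)}}$ with each $C^{(l)}_p\in\mathbb{R}^{1\times k^{(l)}_p}$ having nonnegative entries summing to $1$. $L^{(1)}=K^{(1)}L^{(1)}_D$ and $L^{(l)}=B^{(1)}\cdots B^{(l-1)}K^{(l)}L^{(l)}_DC^{(l-1)}\cdots C^{(1)}$ for $l=2,\dots,M$. $\lambda(A)$ is the set of eigenvalues of $A$. *)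

theory Defs
  imports Complex_Main "Jordan_Normal_Form.Spectral_Radius"
begin

text \<open>Conventions: layers are numbered 1..M, nodes and groups 0-based.
  N l = number of nodes of layer l; k l p = size of group p (p < N (l+1)) of layer l;
  A l p i j = adjacency matrix entry of the graph on group p of layer l (i,j < k l p);
  a i = weight of node i of layer 1; c l p j = j-th entry of the row C^(l)_p.\<close>

definition goff :: "(nat \<Rightarrow> nat \<Rightarrow> nat) \<Rightarrow> nat \<Rightarrow> nat \<Rightarrow> nat" where
  "goff k l p = (\<Sum>m<p. k l m)"

text \<open>hw a k l i = a^(l)_i (meaningful for l \<ge> 1).\<close>
fun hw :: "(nat \<Rightarrow> real) \<Rightarrow> (nat \<Rightarrow> nat \<Rightarrow> nat) \<Rightarrow> nat \<Rightarrow> nat \<Rightarrow> real" where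
  "hw a k 0 i = a i"
| "hw a k (Suc 0) i = a i"
| "hw a k (Suc (Suc l)) p =
     (\<Sum>i\<in>{goff k (Suc l) p ..< goff k (Suc l) p + k (Suc l) p}. hw a k (Suc l) i)"

definition graph_connected :: "nat \<Rightarrow> (nat \<Rightarrow> nat \<Rightarrow> real) \<Rightarrow> bool" where
  "graph_connected n A =
     (\<forall>i<n. \<forall>j<n. (\<lambda>x y. x < n \<and> y < n \<and> A x y = 1)\<^sup>*\<^sup>* i j)"

definition laplacian :: "nat \<Rightarrow> (nat \<Rightarrow> nat \<Rightarrow> real) \<Rightarrow> complex mat" where
  "laplacian n A = mat n n (\<lambda>(i,j).
      complex_of_real ((if i = j then (\<Sum>m<n. A i m) else 0) - A i j))"

definition LD :: "(nat \<Rightarrow> nat) \<Rightarrow> (nat \<Rightarrow> nat \<Rightarrow> nat) \<Rightarrow> (nat \<Rightarrow> nat \<Rightarrow> nat \<Rightarrow> nat \<Rightarrow> real)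
    \<Rightarrow> nat \<Rightarrow> complex mat" where
  "LD N k A l = diag_block_mat (map (\<lambda>p. laplacian (k l p) (A l p)) [0..<N (Suc l)])"

definition Kmat :: "(nat \<Rightarrow> nat) \<Rightarrow> (nat \<Rightarrow> real) \<Rightarrow> (nat \<Rightarrow> nat \<Rightarrow> nat) \<Rightarrow> nat \<Rightarrow> complex mat" where
  "Kmat N a k l = mat (N l) (N l) (\<lambda>(i,j). if i = j then complex_of_real (1 / hw a k l i) else 0)"

definition Bmat :: "(nat \<Rightarrow> nat) \<Rightarrow> (nat \<Rightarrow> nat \<Rightarrow> nat) \<Rightarrow> nat \<Rightarrow> complex mat" where
  "Bmat N k l = diag_block_mat (map (\<lambda>p. mat (k l p) 1 (\<lambda>_. 1)) [0..<N (Suc l)])"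

definition Cmat :: "(nat \<Rightarrow> nat) \<Rightarrow> (nat \<Rightarrow> nat \<Rightarrow> nat) \<Rightarrow> (nat \<Rightarrow> nat \<Rightarrow> nat \<Rightarrow> real)
    \<Rightarrow> nat \<Rightarrow> complex mat" where
  "Cmat N k c l = diag_block_mat
     (map (\<lambda>p. mat 1 (k l p) (\<lambda>(_,j). complex_of_real (c l p j))) [0..<N (Suc l)])"

primrec Bprod :: "(nat \<Rightarrow> nat) \<Rightarrow> (nat \<Rightarrow> nat \<Rightarrow> nat) \<Rightarrow> nat \<Rightarrow> complex mat" where
  "Bprod N k 0 = 1\<^sub>m (N 1)"
| "Bprod N k (Suc m) = Bprod N k m * Bmat N k (Suc m)"

primrec Cprod :: "(nat \<Rightarrow> nat) \<Rightarrow> (nat \<Rightarrow> nat \<Rightarrow> nat) \<Rightarrow> (nat \<Rightarrow> nat \<Rightarrow> nat \<Rightarrow> real)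
    \<Rightarrow> nat \<Rightarrow> complex mat" where
  "Cprod N k c 0 = 1\<^sub>m (N 1)"
| "Cprod N k c (Suc m) = Cmat N k c (Suc m) * Cprod N k c m"

definition HL :: "(nat \<Rightarrow> nat) \<Rightarrow> (nat \<Rightarrow> nat \<Rightarrow> nat) \<Rightarrow> (nat \<Rightarrow> nat \<Rightarrow> nat \<Rightarrow> nat \<Rightarrow> real)
    \<Rightarrow> (nat \<Rightarrow> real) \<Rightarrow> (nat \<Rightarrow> nat \<Rightarrow> nat \<Rightarrow> real) \<Rightarrow> nat \<Rightarrow> complex mat" where
  "HL N k A a c l = Bprod N k (l - 1) * Kmat N a k l * LD N k A l * Cprod N k c (l - 1)"

primrec msum :: "nat \<Rightarrow> (nat \<Rightarrow> complex mat) \<Rightarrow> nat \<Rightarrow> complex mat" where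
  "msum n f 0 = 0\<^sub>m n n"
| "msum n f (Suc m) = msum n f m + f (Suc m)"

end

theory Submission
  imports Defs
begin

lemma eig_right:
  fixes A B :: "complex mat"
  assumes A: "A \<in> carrier_mat n n" and B: "B \<in> carrier_mat n n"
    and AB: "A * B = 0\<^sub>m n n" and e: "e \<noteq> 0" and ev: "eigenvalue B e"
  shows "eigenvalue (A + B) e"
proof -
  from ev obtain v where v: "v \<in> carrier_vec n" "v \<noteq> 0\<^sub>v n" "B *\<^sub>v v = e \<cdot>\<^sub>v v"
    unfolding eigenvalue_def eigenvector_def using B by auto
  have "e \<cdot>\<^sub>v (A *\<^sub>v v) = A *\<^sub>v (e \<cdot>\<^sub>v v)" using mult_mat_vec[OF A v(1)] by simp
  also have "\<dots> = A *\<^sub>v (B *\<^sub>v v)" using v by simp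
  also have "\<dots> = (A * B) *\<^sub>v v" using A B v by simp
  also have "\<dots> = 0\<^sub>v n" using AB v by auto
  finally have "e \<cdot>\<^sub>v (A *\<^sub>v v) = 0\<^sub>v n" .
  hence "(1/e) \<cdot>\<^sub>v (e \<cdot>\<^sub>v (A *\<^sub>v v)) = 0\<^sub>v n" by (intro eq_vecI, auto)
  hence Av: "A *\<^sub>v v = 0\<^sub>v n" using e by (simp add: smult_smult_assoc)
  have "(A + B) *\<^sub>v v = A *\<^sub>v v + B *\<^sub>v v" using A B v by (simp add: add_mult_distrib_mat_vec)
  also have "\<dots> = e \<cdot>\<^sub>v v" using Av v by simp
  finally show ?thesis unfolding eigenvalue_def eigenvector_def using v A B by auto
qed

lemma eig_transpose:
  fixes A :: "complex mat"
  assumes A: "A \<in> carrier_mat n n"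
  shows "eigenvalue (transpose_mat A) e = eigenvalue A e"
  using A by (simp add: eigenvalue_root_char_poly[OF A] eigenvalue_root_char_poly[of _ n])

lemma eig_left:
  fixes A B :: "complex mat"
  assumes A: "A \<in> carrier_mat n n" and B: "B \<in> carrier_mat n n"
    and AB: "A * B = 0\<^sub>m n n" and e: "e \<noteq> 0" and ev: "eigenvalue A e"
  shows "eigenvalue (A + B) e"
proof -
  have "transpose_mat B * transpose_mat A = 0\<^sub>m n n"
    using transpose_mult[OF A B, symmetric] AB by simp
  moreover have "eigenvalue (transpose_mat A) e" using eig_transpose[OF A] ev by simp
  ultimately have "eigenvalue (transpose_mat B + transpose_mat A) e"
    using eig_right[of "transpose_mat B" n "transpose_mat A" e] A B e by auto
  also have "transpose_mat B + transpose_mat A = transpose_mat (A + B)"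
    using transpose_add[OF A B] A B by (simp add: comm_add_mat[of _ n n])
  finally show ?thesis using eig_transpose[of "A + B" n e] A B by simp
qed

lemma eig_sum_sub:
  fixes A B :: "complex mat"
  assumes A: "A \<in> carrier_mat n n" and B: "B \<in> carrier_mat n n"
    and AB: "A * B = 0\<^sub>m n n" and ev: "eigenvalue (A + B) e"
  shows "eigenvalue A e \<or> eigenvalue B e"
proof -
  from ev obtain v where v: "v \<in> carrier_vec n" "v \<noteq> 0\<^sub>v n" "(A + B) *\<^sub>v v = e \<cdot>\<^sub>v v"
    unfolding eigenvalue_def eigenvector_def using B by auto
  define w where "w = A *\<^sub>v v"
  have w: "w \<in> carrier_vec n" using A v unfolding w_def by simp
  have sum: "(A + B) *\<^sub>v v = w + B *\<^sub>v v" using A B v unfolding w_def by (simp add: add_mult_distrib_mat_vec)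
  have "A *\<^sub>v w = A *\<^sub>v (w + B *\<^sub>v v)"
  proof -
    have "A *\<^sub>v (w + B *\<^sub>v v) = A *\<^sub>v w + A *\<^sub>v (B *\<^sub>v v)" using A B v w by (simp add: mult_add_distrib_mat_vec)
    also have "A *\<^sub>v (B *\<^sub>v v) = 0\<^sub>v n" using A B v AB assoc_mult_mat_vec[OF A B v(1), symmetric] by auto
    finally show ?thesis using A w by simp
  qed
  also have "\<dots> = A *\<^sub>v (e \<cdot>\<^sub>v v)" using sum v by simp
  also have "\<dots> = e \<cdot>\<^sub>v w" using mult_mat_vec[OF A v(1)] unfolding w_def by simp
  finally have Aw: "A *\<^sub>v w = e \<cdot>\<^sub>v w" .
  show ?thesis
  proof (cases "w = 0\<^sub>v n")
    case False
    then show ?thesis using Aw w A unfolding eigenvalue_def eigenvector_def by auto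
  next
    case True
    then have "B *\<^sub>v v = e \<cdot>\<^sub>v v" using sum v B by simp
    then show ?thesis using v B unfolding eigenvalue_def eigenvector_def by auto
  qed
qed

lemma eig_zero_mat:
  assumes e: "(e::complex) \<noteq> 0" shows "\<not> eigenvalue (0\<^sub>m n n) e"
proof
  assume "eigenvalue (0\<^sub>m n n) e"
  then obtain v where v: "v \<in> carrier_vec n" "v \<noteq> 0\<^sub>v n" "0\<^sub>m n n *\<^sub>v v = e \<cdot>\<^sub>v v"
    unfolding eigenvalue_def eigenvector_def by auto
  moreover have "0\<^sub>m n n *\<^sub>v v = 0\<^sub>v n" using v(1) by (intro eq_vecI) auto
  ultimately have "e \<cdot>\<^sub>v v = 0\<^sub>v n" by simp
  hence "(1/e) \<cdot>\<^sub>v (e \<cdot>\<^sub>v v) = (1/e) \<cdot>\<^sub>v 0\<^sub>v n" by simp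
  also have "\<dots> = 0\<^sub>v n" by (intro eq_vecI) auto
  finally have "(1/e) \<cdot>\<^sub>v (e \<cdot>\<^sub>v v) = 0\<^sub>v n" .
  hence "v = 0\<^sub>v n" using e by (simp add: smult_smult_assoc)
  with v show False by simp
qed

lemma msum_carrier:
  "(\<forall>i\<in>{1..m}. f i \<in> carrier_mat n n) \<Longrightarrow> msum n f m \<in> carrier_mat n n"
  by (induct m) auto

lemma msum_mult_zero:
  assumes "\<forall>i\<in>{1..m}. f i \<in> carrier_mat n n" "X \<in> carrier_mat n q"
    "\<forall>i\<in>{1..m}. f i * X = 0\<^sub>m n q"
  shows "msum n f m * X = 0\<^sub>m n q"
  using assms
proof (induct m)
  case 0 then show ?case by auto
next
  case (Suc m)
  have c: "msum n f m \<in> carrier_mat n n" using Suc.prems by (intro msum_carrier) auto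
  have "msum n f (Suc m) * X = msum n f m * X + f (Suc m) * X"
    using c Suc.prems by (simp add: add_mult_distrib_mat)
  also have "\<dots> = 0\<^sub>m n q" using Suc by auto
  finally show ?case .
qed

lemma msum_eig:
  fixes f :: "nat \<Rightarrow> complex mat"
  assumes "\<forall>i\<in>{1..m}. f i \<in> carrier_mat n n"
    "\<forall>i j. 1 \<le> i \<longrightarrow> i < j \<longrightarrow> j \<le> m \<longrightarrow> f i * f j = 0\<^sub>m n n"
    "e \<noteq> 0"
  shows "eigenvalue (msum n f m) e \<longleftrightarrow> (\<exists>l\<in>{1..m}. eigenvalue (f l) e)"
  using assms
proof (induct m)
  case 0 then show ?case using eig_zero_mat by auto
next
  case (Suc m)
  have c: "msum n f m \<in> carrier_mat n n" using Suc.prems by (intro msum_carrier) auto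
  have fc: "f (Suc m) \<in> carrier_mat n n" using Suc.prems by auto
  have z: "msum n f m * f (Suc m) = 0\<^sub>m n n"
    using Suc.prems by (intro msum_mult_zero) auto
  have IH: "eigenvalue (msum n f m) e \<longleftrightarrow> (\<exists>l\<in>{1..m}. eigenvalue (f l) e)"
    using Suc by auto
  have "eigenvalue (msum n f (Suc m)) e \<longleftrightarrow> eigenvalue (msum n f m) e \<or> eigenvalue (f (Suc m)) e"
    using eig_left[OF c fc z Suc.prems(3)] eig_right[OF c fc z Suc.prems(3)] eig_sum_sub[OF c fc z]
    by auto
  moreover have "{1..Suc m} = insert (Suc m) {1..m}" by auto
  ultimately show ?case using IH by auto
qed

lemma diag_block_mult:
  assumes "\<forall>p\<in>set ps. dim_col (f p) = dim_row (g p)"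
  shows "diag_block_mat (map f ps) * diag_block_mat (map g ps :: 'a::comm_ring_1 mat list)
       = diag_block_mat (map (\<lambda>p. f p * g p) ps)"
  using assms
proof (induct ps)
  case Nil then show ?case by simp
next
  case (Cons p ps)
  define F where "F = diag_block_mat (map f ps)"
  define G where "G = diag_block_mat (map g ps)"
  have IH: "F * G = diag_block_mat (map (\<lambda>p. f p * g p) ps)" using Cons unfolding F_def G_def by auto
  have dFG: "dim_col F = dim_row G" using Cons.prems unfolding dim_diag_block_mat F_def G_def
    by (induct ps) auto
  define r where "r = dim_row (f p)"
  define n1 where "n1 = dim_col (f p)"
  define c where "c = dim_col (g p)"
  define R where "R = dim_row F"
  define n2 where "n2 = dim_col F"
  define C where "C = dim_col G"
  have f: "f p \<in> carrier_mat r n1" and g: "g p \<in> carrier_mat n1 c"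
    and F: "F \<in> carrier_mat R n2" and G: "G \<in> carrier_mat n2 C"
    using Cons.prems dFG unfolding r_def n1_def c_def R_def n2_def C_def carrier_mat_def by auto
  have "diag_block_mat (map f (p # ps)) * diag_block_mat (map g (p # ps)) =
    four_block_mat (f p) (0\<^sub>m r n2) (0\<^sub>m R n1) F * four_block_mat (g p) (0\<^sub>m n1 C) (0\<^sub>m n2 c) G"
    unfolding list.map diag_block_mat.simps Let_def F_def[symmetric] G_def[symmetric]
    using dFG Cons.prems unfolding r_def n1_def c_def R_def n2_def C_def carrier_mat_def by simp
  also have "\<dots> = four_block_mat (f p * g p + 0\<^sub>m r n2 * 0\<^sub>m n2 c) (f p * 0\<^sub>m n1 C + 0\<^sub>m r n2 * G)
       (0\<^sub>m R n1 * g p + F * 0\<^sub>m n2 c) (0\<^sub>m R n1 * 0\<^sub>m n1 C + F * G)"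
    by (rule mult_four_block_mat[OF f _ _ F g _ _ G]) auto
  also have "\<dots> = four_block_mat (f p * g p) (0\<^sub>m r C) (0\<^sub>m R c) (F * G)"
  proof -
    have a: "f p * g p + 0\<^sub>m r n2 * 0\<^sub>m n2 c = f p * g p"
      using f g by (simp add: left_mult_zero_mat)
    have b: "f p * 0\<^sub>m n1 C + 0\<^sub>m r n2 * G = 0\<^sub>m r C"
      using f G by (simp add: left_mult_zero_mat right_mult_zero_mat)
    have cc: "0\<^sub>m R n1 * g p + F * 0\<^sub>m n2 c = 0\<^sub>m R c"
      using g F by (simp add: left_mult_zero_mat right_mult_zero_mat)
    have d: "0\<^sub>m R n1 * 0\<^sub>m n1 C + F * G = F * G"
      using F G by (simp add: left_mult_zero_mat)
    show ?thesis unfolding a b cc d ..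
  qed
  also have "\<dots> = diag_block_mat (map (\<lambda>p. f p * g p) (p # ps))"
    unfolding list.map diag_block_mat.simps Let_def IH[symmetric]
    using f g F G by simp
  finally show ?case .
qed

lemma diag_block_zero:
  "diag_block_mat (map (\<lambda>p. 0\<^sub>m (r p) (c p)) ps) = (0\<^sub>m (sum_list (map r ps)) (sum_list (map c ps)) :: 'a::zero mat)"
  by (induct ps) (auto simp: Let_def dim_diag_block_mat o_def)

lemma diag_block_ones:
  "diag_block_mat (map (\<lambda>p. 1\<^sub>m 1) ps) = (1\<^sub>m (length ps) :: 'a::{zero_neq_one} mat)"
proof -
  have "diag_block_mat (map (\<lambda>A. 1\<^sub>m (dim_row A)) (map (\<lambda>p. 1\<^sub>m 1 :: 'a mat) ps)) = 1\<^sub>m (sum_list (map dim_row (map (\<lambda>p. 1\<^sub>m 1 :: 'a mat) ps)))"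
    by (rule diag_block_one_mat)
  moreover have "sum_list (map dim_row (map (\<lambda>p. 1\<^sub>m 1 :: 'a mat) ps)) = length ps"
    by (induct ps) auto
  ultimately show ?thesis by (simp add: o_def)
qed

lemma sum_list_upt0: "sum_list (map f [0..<n]) = (\<Sum>p<n. f p)"
  by (induct n) auto

lemma lap_ones: "laplacian n A * mat n 1 (\<lambda>_. 1) = 0\<^sub>m n 1"
proof (rule eq_matI)
  fix i j assume i: "i < dim_row (0\<^sub>m n 1 :: complex mat)" and j: "j < dim_col (0\<^sub>m n 1 :: complex mat)"
  hence i: "i < n" and j: "j = 0" by auto
  have "(laplacian n A * mat n 1 (\<lambda>_. 1)) $$ (i, j) =
     (\<Sum>m<n. complex_of_real ((if i = m then (\<Sum>m<n. A i m) else 0) - A i m))"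
    using i j unfolding laplacian_def by (auto intro!: sum.cong simp: scalar_prod_def lessThan_atLeast0)
  also have "\<dots> = complex_of_real (\<Sum>m<n. ((if i = m then (\<Sum>m<n. A i m) else 0) - A i m))"
    by simp
  also have "(\<Sum>m<n. ((if i = m then (\<Sum>m<n. A i m) else 0) - A i m)) = 0"
    using i by (simp add: sum_subtractf)
  finally show "(laplacian n A * mat n 1 (\<lambda>_. 1)) $$ (i, j) = 0\<^sub>m n 1 $$ (i, j)" using i j by simp
qed (auto simp: laplacian_def)

lemma cb_one:
  assumes "(\<Sum>j<n. c j) = 1"
  shows "mat 1 n (\<lambda>(_, j). complex_of_real (c j)) * mat n 1 (\<lambda>_. 1) = 1\<^sub>m 1"
proof (rule eq_matI)
  fix i j assume "i < dim_row (1\<^sub>m 1 :: complex mat)" "j < dim_col (1\<^sub>m 1 :: complex mat)"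
  hence ij: "i = 0" "j = 0" by auto
  have "(mat 1 n (\<lambda>(_, j). complex_of_real (c j)) * mat n 1 (\<lambda>_. 1)) $$ (i, j) =
    (\<Sum>m<n. complex_of_real (c m))"
    using ij by (auto intro!: sum.cong simp: scalar_prod_def lessThan_atLeast0)
  also have "\<dots> = complex_of_real (\<Sum>m<n. c m)" by simp
  finally show "(mat 1 n (\<lambda>(_, j). complex_of_real (c j)) * mat n 1 (\<lambda>_. 1)) $$ (i, j) = 1\<^sub>m 1 $$ (i, j)"
    using ij assms by simp
qed auto

lemma lap_dim[simp]: "dim_row (laplacian n B) = n" "dim_col (laplacian n B) = n"
  by (auto simp: laplacian_def)

lemma Bmat_carrier: "Bmat N k l \<in> carrier_mat (\<Sum>p<N (Suc l). k l p) (N (Suc l))"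
proof -
  have "dim_row (Bmat N k l) = (\<Sum>p<N (Suc l). k l p)" unfolding Bmat_def
    by (subst dim_diag_block_mat) (simp add: sum_list_upt0 o_def)
  moreover have "dim_col (Bmat N k l) = N (Suc l)" unfolding Bmat_def
    by (subst dim_diag_block_mat) (simp add: sum_list_upt0 o_def)
  ultimately show ?thesis unfolding carrier_mat_def by simp
qed

lemma Cmat_carrier: "Cmat N k c l \<in> carrier_mat (N (Suc l)) (\<Sum>p<N (Suc l). k l p)"
proof -
  have "dim_col (Cmat N k c l) = (\<Sum>p<N (Suc l). k l p)" unfolding Cmat_def
    by (subst dim_diag_block_mat) (simp add: sum_list_upt0 o_def)
  moreover have "dim_row (Cmat N k c l) = N (Suc l)" unfolding Cmat_def
    by (subst dim_diag_block_mat) (simp add: sum_list_upt0 o_def)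
  ultimately show ?thesis unfolding carrier_mat_def by simp
qed

lemma LD_carrier: "LD N k A l \<in> carrier_mat (\<Sum>p<N (Suc l). k l p) (\<Sum>p<N (Suc l). k l p)"
proof -
  have "dim_col (LD N k A l) = (\<Sum>p<N (Suc l). k l p)" unfolding LD_def
    by (subst dim_diag_block_mat) (simp add: sum_list_upt0 o_def)
  moreover have "dim_row (LD N k A l) = (\<Sum>p<N (Suc l). k l p)" unfolding LD_def
    by (subst dim_diag_block_mat) (simp add: sum_list_upt0 o_def)
  ultimately show ?thesis unfolding carrier_mat_def by simp
qed

lemma Kmat_carrier: "Kmat N a k l \<in> carrier_mat (N l) (N l)"
  unfolding Kmat_def by simp

lemma CB_one:
  assumes "\<forall>p<N (Suc l). (\<Sum>j<k l p. c l p j) = 1"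
  shows "Cmat N k c l * Bmat N k l = 1\<^sub>m (N (Suc l))"
proof -
  have "Cmat N k c l * Bmat N k l = diag_block_mat (map (\<lambda>p. mat 1 (k l p) (\<lambda>(_, j). complex_of_real (c l p j)) * mat (k l p) 1 (\<lambda>_. 1)) [0..<N (Suc l)])"
    unfolding Cmat_def Bmat_def by (rule diag_block_mult) auto
  also have "\<dots> = diag_block_mat (map (\<lambda>p. 1\<^sub>m 1) [0..<N (Suc l)])"
    using assms by (intro arg_cong[where f = diag_block_mat] map_cong refl cb_one) auto
  also have "\<dots> = 1\<^sub>m (length [0..<N (Suc l)])" by (rule diag_block_ones)
  also have "\<dots> = 1\<^sub>m (N (Suc l))" by simp
  finally show ?thesis .
qed

lemma LB_zero: "LD N k A l * Bmat N k l = 0\<^sub>m (\<Sum>p<N (Suc l). k l p) (N (Suc l))"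
proof -
  have "LD N k A l * Bmat N k l = diag_block_mat (map (\<lambda>p. laplacian (k l p) (A l p) * mat (k l p) 1 (\<lambda>_. 1)) [0..<N (Suc l)])"
    unfolding LD_def Bmat_def by (rule diag_block_mult) (auto simp: laplacian_def)
  also have "\<dots> = diag_block_mat (map (\<lambda>p. 0\<^sub>m (k l p) 1) [0..<N (Suc l)])"
    by (intro arg_cong[where f = diag_block_mat] map_cong refl lap_ones)
  also have "\<dots> = 0\<^sub>m (\<Sum>p<N (Suc l). k l p) (N (Suc l))"
    by (simp add: diag_block_zero sum_list_upt0)
  finally show ?thesis .
qed

locale hs =
  fixes M :: nat and N :: "nat \<Rightarrow> nat" and k :: "nat \<Rightarrow> nat \<Rightarrow> nat"
    and c :: "nat \<Rightarrow> nat \<Rightarrow> nat \<Rightarrow> real"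
  assumes KS: "\<forall>l\<in>{1..M}. (\<Sum>p<N (Suc l). k l p) = N l"
    and CS: "\<forall>l\<in>{1..M-1}. \<forall>p<N (Suc l). (\<Sum>j<k l p. c l p j) = 1"
begin

lemma Bmat_c: "1 \<le> l \<Longrightarrow> l \<le> M \<Longrightarrow> Bmat N k l \<in> carrier_mat (N l) (N (Suc l))"
  using Bmat_carrier[of N k l] KS by auto

lemma Cmat_c: "1 \<le> l \<Longrightarrow> l \<le> M \<Longrightarrow> Cmat N k c l \<in> carrier_mat (N (Suc l)) (N l)"
  using Cmat_carrier[of N k c l] KS by auto

lemma LD_c: "1 \<le> l \<Longrightarrow> l \<le> M \<Longrightarrow> LD N k A l \<in> carrier_mat (N l) (N l)"
  using LD_carrier[of N k A l] KS by auto

lemma Bprod_c: "m \<le> M \<Longrightarrow> Bprod N k m \<in> carrier_mat (N 1) (N (Suc m))"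
proof (induct m)
  case 0 then show ?case by simp
next
  case (Suc m)
  then show ?case using Bmat_c[of "Suc m"] by simp
qed

lemma Cprod_c: "m \<le> M \<Longrightarrow> Cprod N k c m \<in> carrier_mat (N (Suc m)) (N 1)"
proof (induct m)
  case 0 then show ?case by simp
next
  case (Suc m)
  then show ?case using Cmat_c[of "Suc m"] by simp
qed

lemma CpBp: "m \<le> M - 1 \<Longrightarrow> Cprod N k c m * Bprod N k m = 1\<^sub>m (N (Suc m))"
proof (induct m)
  case 0 then show ?case by simp
next
  case (Suc m)
  have Cm: "Cmat N k c (Suc m) \<in> carrier_mat (N (Suc (Suc m))) (N (Suc m))" using Cmat_c[of "Suc m"] Suc by simp
  have Bm: "Bmat N k (Suc m) \<in> carrier_mat (N (Suc m)) (N (Suc (Suc m)))" using Bmat_c[of "Suc m"] Suc by simp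
  have Cp: "Cprod N k c m \<in> carrier_mat (N (Suc m)) (N 1)" using Cprod_c[of m] Suc by simp
  have Bp: "Bprod N k m \<in> carrier_mat (N 1) (N (Suc m))" using Bprod_c[of m] Suc by simp
  have CB: "Cmat N k c (Suc m) * Bmat N k (Suc m) = 1\<^sub>m (N (Suc (Suc m)))"
    using CB_one[where N=N and l="Suc m" and k=k and c=c] CS Suc by auto
  have "Cprod N k c (Suc m) * Bprod N k (Suc m) = (Cmat N k c (Suc m) * Cprod N k c m) * (Bprod N k m * Bmat N k (Suc m))"
    by simp
  also have "\<dots> = Cmat N k c (Suc m) * ((Cprod N k c m * Bprod N k m) * Bmat N k (Suc m))"
    using Cm Cp Bp Bm by (simp add: assoc_mult_mat[of _ _ _ _ _ _ "N (Suc (Suc m))"])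
  also have "\<dots> = Cmat N k c (Suc m) * Bmat N k (Suc m)" using Suc Bm by simp
  finally show ?case using CB by simp
qed

lemma Bsplit: "1 \<le> l \<Longrightarrow> l \<le> j \<Longrightarrow> j \<le> M \<Longrightarrow>
   \<exists>X \<in> carrier_mat (N (Suc l)) (N (Suc j)). Bprod N k j = Bprod N k (l - 1) * Bmat N k l * X"
proof (induct j)
  case 0 then show ?case by simp
next
  case (Suc j)
  show ?case
  proof (cases "l = Suc j")
    case True
    have Bl: "Bmat N k l \<in> carrier_mat (N l) (N (Suc l))" using Bmat_c[of l] Suc.prems by simp
    have "Bprod N k (Suc j) = Bprod N k (l - 1) * Bmat N k l"
      using True by simp
    also have "\<dots> = Bprod N k (l - 1) * Bmat N k l * 1\<^sub>m (N (Suc l))"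
      using Bl by (simp add: right_mult_one_mat')
    finally have "Bprod N k (Suc j) = Bprod N k (l - 1) * Bmat N k l * 1\<^sub>m (N (Suc l))" .
    then show ?thesis using True by (intro bexI[of _ "1\<^sub>m (N (Suc l))"]) auto
  next
    case False
    then obtain X where X: "X \<in> carrier_mat (N (Suc l)) (N (Suc j))"
      "Bprod N k j = Bprod N k (l - 1) * Bmat N k l * X" using Suc by auto
    have Bm: "Bmat N k (Suc j) \<in> carrier_mat (N (Suc j)) (N (Suc (Suc j)))" using Bmat_c[of "Suc j"] Suc.prems by simp
    have Bp: "Bprod N k (l - 1) * Bmat N k l \<in> carrier_mat (N 1) (N (Suc l))"
    proof -
      have "Bprod N k (l - 1) \<in> carrier_mat (N 1) (N l)" using Bprod_c[of "l - 1"] Suc.prems by simp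
      moreover have "Bmat N k l \<in> carrier_mat (N l) (N (Suc l))" using Bmat_c[of l] Suc.prems by simp
      ultimately show ?thesis by (rule mult_carrier_mat)
    qed
    have "Bprod N k (Suc j) = (Bprod N k (l - 1) * Bmat N k l * X) * Bmat N k (Suc j)"
      using X(2) by simp
    also have "\<dots> = Bprod N k (l - 1) * Bmat N k l * (X * Bmat N k (Suc j))"
      by (rule assoc_mult_mat[OF Bp X(1) Bm])
    finally have "Bprod N k (Suc j) = Bprod N k (l - 1) * Bmat N k l * (X * Bmat N k (Suc j))" .
    moreover have "X * Bmat N k (Suc j) \<in> carrier_mat (N (Suc l)) (N (Suc (Suc j)))" using X Bm by simp
    ultimately show ?thesis by blast
  qed
qed

lemma HL_c: "1 \<le> l \<Longrightarrow> l \<le> M \<Longrightarrow> HL N k A a c l \<in> carrier_mat (N 1) (N 1)"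
proof -
  assume l: "1 \<le> l" "l \<le> M"
  have Bp: "Bprod N k (l - 1) \<in> carrier_mat (N 1) (N l)" using Bprod_c[of "l - 1"] l by simp
  have Cp: "Cprod N k c (l - 1) \<in> carrier_mat (N l) (N 1)" using Cprod_c[of "l - 1"] l by simp
  have K: "Kmat N a k l \<in> carrier_mat (N l) (N l)" by (rule Kmat_carrier)
  have L: "LD N k A l \<in> carrier_mat (N l) (N l)" using LD_c l by simp
  show ?thesis unfolding HL_def
    by (rule mult_carrier_mat[OF mult_carrier_mat[OF mult_carrier_mat[OF Bp K] L] Cp])
qed

lemma HL_zero:
  assumes l: "1 \<le> l" "l \<le> M" and X: "X \<in> carrier_mat (N (Suc l)) q"
  shows "HL N k A a c l * (Bprod N k (l - 1) * Bmat N k l * X) = 0\<^sub>m (N 1) q"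
proof -
  let ?Bp = "Bprod N k (l - 1)" and ?Cp = "Cprod N k c (l - 1)" and ?K = "Kmat N a k l"
    and ?L = "LD N k A l" and ?Bm = "Bmat N k l"
  have Bp: "?Bp \<in> carrier_mat (N 1) (N l)" using Bprod_c[of "l - 1"] l by simp
  have Cp: "?Cp \<in> carrier_mat (N l) (N 1)" using Cprod_c[of "l - 1"] l by simp
  have K: "?K \<in> carrier_mat (N l) (N l)" by (rule Kmat_carrier)
  have L: "?L \<in> carrier_mat (N l) (N l)" using LD_c l by simp
  have Bm: "?Bm \<in> carrier_mat (N l) (N (Suc l))" using Bmat_c l by simp
  have CB: "?Cp * ?Bp = 1\<^sub>m (N l)" using CpBp[of "l - 1"] l by simp
  have LB: "?L * ?Bm = 0\<^sub>m (N l) (N (Suc l))" using LB_zero[where N=N and k=k and A=A and l=l] KS l by simp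
  define P where "P = ?Bp * ?K * ?L"
  have P: "P \<in> carrier_mat (N 1) (N l)" unfolding P_def using Bp K L by simp
  have "HL N k A a c l * (?Bp * ?Bm * X) = (P * ?Cp) * (?Bp * (?Bm * X))"
    unfolding HL_def P_def using Bp Bm X by simp
  also have "\<dots> = P * ((?Cp * ?Bp) * (?Bm * X))"
    using P Cp Bp Bm X by (simp add: assoc_mult_mat[of _ _ _ _ _ _ q])
  also have "\<dots> = (P * ?Bm) * X" using CB P Bm X by simp
  also have "P * ?Bm = (?Bp * ?K) * (?L * ?Bm)" unfolding P_def
    by (rule assoc_mult_mat[OF mult_carrier_mat[OF Bp K] L Bm])
  also have "\<dots> = 0\<^sub>m (N 1) (N (Suc l))" using LB Bp K by simp
  finally show ?thesis using X by simp
qed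

end

theorem corollary1:
  fixes M :: nat and N :: "nat \<Rightarrow> nat" and k :: "nat \<Rightarrow> nat \<Rightarrow> nat"
    and A :: "nat \<Rightarrow> nat \<Rightarrow> nat \<Rightarrow> nat \<Rightarrow> real" and a :: "nat \<Rightarrow> real"
    and c :: "nat \<Rightarrow> nat \<Rightarrow> nat \<Rightarrow> real" and s :: "nat \<Rightarrow> complex"
  assumes M2: "M \<ge> 2"
    and Npos: "\<forall>l\<in>{1..M}. N l > 0"
    and Ntop: "N (Suc M) = 1"
    and kpos: "\<forall>l\<in>{1..M}. \<forall>p<N (Suc l). k l p \<ge> 1"
    and ksum: "\<forall>l\<in>{1..M}. (\<Sum>p<N (Suc l). k l p) = N l"
    and Abin: "\<forall>l\<in>{1..M}. \<forall>p<N (Suc l). \<forall>i<k l p. \<forall>j<k l p. A l p i j = 0 \<or> A l p i j = 1"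
    and Asym: "\<forall>l\<in>{1..M}. \<forall>p<N (Suc l). \<forall>i<k l p. \<forall>j<k l p. A l p i j = A l p j i"
    and Aloop: "\<forall>l\<in>{1..M}. \<forall>p<N (Suc l). \<forall>i<k l p. A l p i i = 0"
    and Aconn: "\<forall>l\<in>{1..M}. \<forall>p<N (Suc l). graph_connected (k l p) (A l p)"
    and apos: "\<forall>i<N 1. a i > 0"
    and cnn: "\<forall>l\<in>{1..M-1}. \<forall>p<N (Suc l). \<forall>j<k l p. c l p j \<ge> 0"
    and csum: "\<forall>l\<in>{1..M-1}. \<forall>p<N (Suc l). (\<Sum>j<k l p. c l p j) = 1"
    and snz: "\<forall>l\<in>{1..M}. s l \<noteq> 0"
  shows "spectrum (msum (N 1) (\<lambda>l. s l \<cdot>\<^sub>m HL N k A a c l) M) =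
           {0} \<union> (\<Union>l\<in>{1..M}. spectrum (s l \<cdot>\<^sub>m HL N k A a c l) - {0})"
proof -
  interpret hs M N k c
    using ksum csum by unfold_locales auto
  define f where "f = (\<lambda>l. s l \<cdot>\<^sub>m HL N k A a c l)"
  have fc: "\<forall>i\<in>{1..M}. f i \<in> carrier_mat (N 1) (N 1)"
    unfolding f_def using HL_c by auto
  have HLz: "HL N k A a c i * Bprod N k j = 0\<^sub>m (N 1) (N (Suc j))"
    if ij: "1 \<le> i" "i \<le> j" "j \<le> M" for i j
  proof -
    obtain X where X: "X \<in> carrier_mat (N (Suc i)) (N (Suc j))"
      "Bprod N k j = Bprod N k (i - 1) * Bmat N k i * X" using Bsplit[OF ij] by blast
    show ?thesis unfolding X(2) by (rule HL_zero[OF _ _ X(1)]) (use ij in auto)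
  qed
  have fz: "\<forall>i j. 1 \<le> i \<longrightarrow> i < j \<longrightarrow> j \<le> M \<longrightarrow> f i * f j = 0\<^sub>m (N 1) (N 1)"
  proof (intro allI impI)
    fix i j assume ij: "1 \<le> i" "i < j" "j \<le> M"
    have Bp: "Bprod N k (j - 1) \<in> carrier_mat (N 1) (N j)" using Bprod_c[of "j - 1"] ij by simp
    have Cp: "Cprod N k c (j - 1) \<in> carrier_mat (N j) (N 1)" using Cprod_c[of "j - 1"] ij by simp
    have K: "Kmat N a k j \<in> carrier_mat (N j) (N j)" by (rule Kmat_carrier)
    have L: "LD N k A j \<in> carrier_mat (N j) (N j)" using LD_c ij by simp
    have Z: "Kmat N a k j * LD N k A j * Cprod N k c (j - 1) \<in> carrier_mat (N j) (N 1)"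
      using K L Cp by (meson mult_carrier_mat)
    have "HL N k A a c j = Bprod N k (j - 1) * (Kmat N a k j * LD N k A j * Cprod N k c (j - 1))"
    proof -
      have "HL N k A a c j = ((Bprod N k (j - 1) * Kmat N a k j) * LD N k A j) * Cprod N k c (j - 1)"
        unfolding HL_def ..
      also have "\<dots> = (Bprod N k (j - 1) * Kmat N a k j) * (LD N k A j * Cprod N k c (j - 1))"
        by (rule assoc_mult_mat[OF mult_carrier_mat[OF Bp K] L Cp])
      also have "\<dots> = Bprod N k (j - 1) * (Kmat N a k j * (LD N k A j * Cprod N k c (j - 1)))"
        by (rule assoc_mult_mat[OF Bp K mult_carrier_mat[OF L Cp]])
      also have "Kmat N a k j * (LD N k A j * Cprod N k c (j - 1)) = Kmat N a k j * LD N k A j * Cprod N k c (j - 1)"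
        by (rule assoc_mult_mat[OF K L Cp, symmetric])
      finally show ?thesis .
    qed
    hence "HL N k A a c i * HL N k A a c j
       = (HL N k A a c i * Bprod N k (j - 1)) * (Kmat N a k j * LD N k A j * Cprod N k c (j - 1))"
    proof -
      have Hi: "HL N k A a c i \<in> carrier_mat (N 1) (N 1)" using HL_c[of i] ij by simp
      assume eq: "HL N k A a c j = Bprod N k (j - 1) * (Kmat N a k j * LD N k A j * Cprod N k c (j - 1))"
      show ?thesis unfolding eq by (rule assoc_mult_mat[OF Hi Bp Z, symmetric])
    qed
    also have "\<dots> = 0\<^sub>m (N 1) (N 1)" using HLz[of i "j - 1"] ij left_mult_zero_mat[OF Z] by simp
    finally have HH: "HL N k A a c i * HL N k A a c j = 0\<^sub>m (N 1) (N 1)" .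
    have "f i * f j = (s i * s j) \<cdot>\<^sub>m (HL N k A a c i * HL N k A a c j)"
    proof -
      have Hi: "HL N k A a c i \<in> carrier_mat (N 1) (N 1)" using HL_c[of i] ij by simp
      have Hj: "HL N k A a c j \<in> carrier_mat (N 1) (N 1)" using HL_c[of j] ij by simp
      have "f i * f j = s i \<cdot>\<^sub>m (HL N k A a c i * (s j \<cdot>\<^sub>m HL N k A a c j))"
        unfolding f_def by (rule mult_smult_assoc_mat[OF Hi smult_carrier_mat[OF Hj]])
      also have "\<dots> = s i \<cdot>\<^sub>m (s j \<cdot>\<^sub>m (HL N k A a c i * HL N k A a c j))"
        by (simp only: mult_smult_distrib[OF Hi Hj])
      also have "\<dots> = (s i * s j) \<cdot>\<^sub>m (HL N k A a c i * HL N k A a c j)"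
        by (intro eq_matI) auto
      finally show ?thesis .
    qed
    then show "f i * f j = 0\<^sub>m (N 1) (N 1)" using HH by simp
  qed
  have Mp: "M = Suc (M - 1)" using M2 by simp
  have BM: "Bprod N k M = Bprod N k (M - 1) * Bmat N k M"
    using Bprod.simps(2)[of N k "M - 1"] Mp by simp
  have BMc: "Bprod N k M \<in> carrier_mat (N 1) 1" using Bprod_c[of M] Ntop by simp
  have BmM: "Bmat N k M = mat (k M 0) 1 (\<lambda>_. 1)"
  proof -
    have "[0..<N (Suc M)] = [0]" using Ntop by simp
    then show ?thesis unfolding Bmat_def by (simp del: diag_block_mat.simps)
  qed
  have kM: "k M 0 \<ge> 1" using kpos M2 Ntop by auto
  have CBM: "Cprod N k c (M - 1) * Bprod N k M = Bmat N k M"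
  proof -
    have Cp: "Cprod N k c (M - 1) \<in> carrier_mat (N M) (N 1)" using Cprod_c[of "M - 1"] Mp by (metis diff_le_self)
    have Bp: "Bprod N k (M - 1) \<in> carrier_mat (N 1) (N M)" using Bprod_c[of "M - 1"] Mp by (metis diff_le_self)
    have Bm: "Bmat N k M \<in> carrier_mat (N M) 1" using Bmat_c[of M] M2 Ntop by simp
    have "Cprod N k c (M - 1) * Bprod N k M = (Cprod N k c (M - 1) * Bprod N k (M - 1)) * Bmat N k M"
      unfolding BM by (rule assoc_mult_mat[OF Cp Bp Bm, symmetric])
    also have "\<dots> = Bmat N k M" using CpBp[of "M - 1"] Bm Mp by (metis le_refl left_mult_one_mat)
    finally show ?thesis .
  qed
  define v where "v = col (Bprod N k M) 0"
  have vc: "v \<in> carrier_vec (N 1)" unfolding v_def by (rule col_carrier_vec[OF _ BMc]) simp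
  have vnz: "v \<noteq> 0\<^sub>v (N 1)"
  proof
    assume v0: "v = 0\<^sub>v (N 1)"
    have "Bprod N k M = 0\<^sub>m (N 1) 1"
      by (rule mat_col_eqI) (use BMc v0 in \<open>auto simp: v_def\<close>)
    hence "Bmat N k M = 0\<^sub>m (N M) 1" using CBM Cprod_c[of "M - 1"] Mp
      by (metis diff_le_self right_mult_zero_mat)
    hence "Bmat N k M $$ (0, 0) = 0" using Npos M2 by auto
    moreover have "Bmat N k M $$ (0, 0) = 1" unfolding BmM using kM by simp
    ultimately show False by simp
  qed
  have mc: "msum (N 1) f M \<in> carrier_mat (N 1) (N 1)" by (rule msum_carrier[OF fc])
  have mz: "msum (N 1) f M * Bprod N k M = 0\<^sub>m (N 1) 1"
  proof (rule msum_mult_zero[OF fc BMc], intro ballI)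
    fix l assume l: "l \<in> {1..M}"
    have "HL N k A a c l * Bprod N k M = 0\<^sub>m (N 1) 1" using HLz[of l M] l Ntop by auto
    then show "f l * Bprod N k M = 0\<^sub>m (N 1) 1" unfolding f_def
      using HL_c[of l] l BMc by (simp add: mult_smult_assoc_mat[of _ "N 1" "N 1"])
  qed
  have "msum (N 1) f M *\<^sub>v v = col (msum (N 1) f M * Bprod N k M) 0"
    unfolding v_def by (rule col_mult2[OF mc BMc, symmetric]) simp
  also have "\<dots> = 0\<^sub>v (N 1)" unfolding mz by (intro eq_vecI) auto
  also have "\<dots> = 0 \<cdot>\<^sub>v v" using vc by (intro eq_vecI) auto
  finally have "eigenvalue (msum (N 1) f M) 0"
    unfolding eigenvalue_def eigenvector_def using vc vnz mc by auto
  hence zero: "0 \<in> spectrum (msum (N 1) f M)" unfolding spectrum_def by simp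
  have nz: "e \<in> spectrum (msum (N 1) f M) \<longleftrightarrow> (\<exists>l\<in>{1..M}. e \<in> spectrum (f l))"
    if "e \<noteq> 0" for e
    using msum_eig[OF fc fz that] unfolding spectrum_def by simp
  show ?thesis
  proof (rule Set.set_eqI)
    fix e
    show "e \<in> spectrum (msum (N 1) (\<lambda>l. s l \<cdot>\<^sub>m HL N k A a c l) M) \<longleftrightarrow>
        e \<in> {0} \<union> (\<Union>l\<in>{1..M}. spectrum (s l \<cdot>\<^sub>m HL N k A a c l) - {0})"
      using zero nz[of e] unfolding f_def by (cases "e = 0") auto
  qed
qed

end
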